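(* Let $f$ be a positive definite function and let $W=\{w_1,\dots,w_N\}\subset V$ be a norming set for $\mathcal{B}_M$. Then for every $x\in\mathcal{L}(G)$: (1) if $\hat{f}_k\le C_1k^{-s}$ for all $k$, with constants $C_1>0$ and $s>1$, then $$\max_{v\in V}|x(v)-\mathrm{I}_Wx(v)|\le\sqrt{\tfrac{C_1}{s-1}}\big(1+\|(\mathbf{S}_W\mathbf{B}_M)^{-1}\|\big)M^{-\frac{s-1}{2}}\|x\|_{K_f};$$ (2) if $\hat{f}_k\le C_2e^{-tk}$ for all $k$, with constants $C_2>0$ and $t>0$, then $$\max_{v\in V}|x(v)-\mathrm{I}_Wx(v)|\le\sqrt{\tfrac{C_2}{1-e^{-t}}}\big(1+\|(\mathbf{S}_W\mathbf{B}_M)^{-1}\|\big)e^{-\frac{t}{2}(M+1)}\|x\|_{K_f}.$$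
   Context: Let $G$ be a graph with vertex set $V=\{v_1,\dots,v_n\}$, symmetric non-negative weighted adjacency matrix $\mathbf{A}$, degree matrix $\mathbf{D}=\mathrm{diag}(\sum_k\mathbf{A}_{ik})$ (positive), and normalized Laplacian $\mathbf{L}=\mathbf{I}_n-\mathbf{D}^{-1/2}\mathbf{A}\mathbf{D}^{-1/2}$. Signals are vectors in $\mathcal{L}(G)\cong\mathbb{R}^n$ with euclidean norm and standard basis $e_1,\dots,e_n$. Fix an orthonormal eigendecomposition $\mathbf{L}=\mathbf{U}\,\mathrm{diag}(\lambda_1,\dots,\lambda_n)\mathbf{U}^\intercal$ with columns $u_1,\dots,u_n$. Fourier transform $\hat{x}=\mathbf{U}^\intercal x$; convolution operator $\mathbf{C}_x=\mathbf{U}\,\mathrm{diag}(\hat{x})\mathbf{U}^\intercal$. For $f\in\mathcal{L}(G)$ let $(\mathbf{K}_f)_{ij}=(\mathbf{C}_{e_j}f)(v_i)$; $f$ is a positive definite function if $\mathbf{K}_f$ is symmetric strictly positive definite; then $\|x\|_{K_f}=\sqrt{x^\intercal\mathbf{K}_f^{-1}x}$. For distinct nodes $w_k=v_{j_k}$, let $(\mathbf{K}_{f,W})_{kl}=(\mathbf{C}_{e_{j_l}}f)(w_k)$; the GBF interpolant is $\mathrm{I}_Wx=\sum_{k=1}^Nc_k\mathbf{C}_{e_{j_k}}f$ with $\mathbf{K}_{f,W}c=(x(w_1),\dots,x(w_N))^\intercal$. Let $\mathcal{B}_M=\mathrm{span}\{u_1,\dots,u_M\}$, $\mathbf{S}_Wx(v)=x(v)$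 for $v\in W$ and $0$ otherwise, $\mathbf{B}_Mx=\sum_{k=1}^M(u_k^\intercal x)u_k$. $W$ is a norming set for $\mathcal{B}_M$ if $\mathbf{S}_W\mathbf{B}_M$ is injective on $\mathcal{B}_M$; $\|(\mathbf{S}_W\mathbf{B}_M)^{-1}\|$ is the euclidean operator norm of the inverse of $\mathbf{S}_W\mathbf{B}_M|_{\mathcal{B}_M}$ on its image $\mathbf{S}_W(\mathcal{B}_M)$. *)

theory Defs
  imports Complex_Main
begin

text \<open>Conventions: the graph has vertices v_1..v_n, identified with indices 1..n.
Signals are functions nat => real of which only the values on {1..n} matter.
U i k is the i-th entry of the k-th eigenvector u_k.\<close>

definition vnorm :: "nat \<Rightarrow> (nat \<Rightarrow> real) \<Rightarrow> real" where
  "vnorm n x = sqrt (\<Sum>i=1..n. (x i)^2)"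

definition gdegree :: "nat \<Rightarrow> (nat \<Rightarrow> nat \<Rightarrow> real) \<Rightarrow> nat \<Rightarrow> real" where
  "gdegree n A i = (\<Sum>k=1..n. A i k)"

definition nlap :: "nat \<Rightarrow> (nat \<Rightarrow> nat \<Rightarrow> real) \<Rightarrow> nat \<Rightarrow> nat \<Rightarrow> real" where
  "nlap n A i j = (if i = j then 1 else 0) - A i j / sqrt (gdegree n A i * gdegree n A j)"

definition orthonormal_eigdec ::
  "nat \<Rightarrow> (nat \<Rightarrow> nat \<Rightarrow> real) \<Rightarrow> (nat \<Rightarrow> nat \<Rightarrow> real) \<Rightarrow> (nat \<Rightarrow> real) \<Rightarrow> bool" where
  "orthonormal_eigdec n L U lam \<longleftrightarrow>
     (\<forall>k\<in>{1..n}. \<forall>l\<in>{1..n}. (\<Sum>i=1..n. U i k * U i l) = (if k = l then 1 else 0)) \<and>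
     (\<forall>i\<in>{1..n}. \<forall>j\<in>{1..n}. L i j = (\<Sum>k=1..n. U i k * lam k * U j k))"

definition gft :: "nat \<Rightarrow> (nat \<Rightarrow> nat \<Rightarrow> real) \<Rightarrow> (nat \<Rightarrow> real) \<Rightarrow> nat \<Rightarrow> real" where
  "gft n U x k = (\<Sum>i=1..n. U i k * x i)"

definition gconv :: "nat \<Rightarrow> (nat \<Rightarrow> nat \<Rightarrow> real) \<Rightarrow> (nat \<Rightarrow> real) \<Rightarrow> (nat \<Rightarrow> real) \<Rightarrow> nat \<Rightarrow> real" where
  "gconv n U x y i = (\<Sum>k=1..n. U i k * gft n U x k * gft n U y k)"

definition unitvec :: "nat \<Rightarrow> nat \<Rightarrow> real" where
  "unitvec j = (\<lambda>i. if i = j then 1 else 0)"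

definition gkernel :: "nat \<Rightarrow> (nat \<Rightarrow> nat \<Rightarrow> real) \<Rightarrow> (nat \<Rightarrow> real) \<Rightarrow> nat \<Rightarrow> nat \<Rightarrow> real" where
  "gkernel n U f i j = gconv n U (unitvec j) f i"

definition pd_function :: "nat \<Rightarrow> (nat \<Rightarrow> nat \<Rightarrow> real) \<Rightarrow> (nat \<Rightarrow> real) \<Rightarrow> bool" where
  "pd_function n U f \<longleftrightarrow>
     (\<forall>i\<in>{1..n}. \<forall>j\<in>{1..n}. gkernel n U f i j = gkernel n U f j i) \<and>
     (\<forall>x. (\<exists>i\<in>{1..n}. x i \<noteq> 0) \<longrightarrow>
        (\<Sum>i=1..n. \<Sum>j=1..n. x i * gkernel n U f i j * x j) > 0)"

definition mat_inv_on :: "nat \<Rightarrow> (nat \<Rightarrow> nat \<Rightarrow> real) \<Rightarrow> nat \<Rightarrow> nat \<Rightarrow> real" where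
  "mat_inv_on n K = (THE B. (\<forall>i j. (i \<notin> {1..n} \<or> j \<notin> {1..n}) \<longrightarrow> B i j = 0) \<and>
     (\<forall>i\<in>{1..n}. \<forall>j\<in>{1..n}. (\<Sum>k=1..n. K i k * B k j) = (if i = j then 1 else 0)))"

definition native_norm :: "nat \<Rightarrow> (nat \<Rightarrow> nat \<Rightarrow> real) \<Rightarrow> (nat \<Rightarrow> real) \<Rightarrow> (nat \<Rightarrow> real) \<Rightarrow> real" where
  "native_norm n U f x =
     sqrt (\<Sum>i=1..n. \<Sum>j=1..n. x i * mat_inv_on n (gkernel n U f) i j * x j)"

text \<open>GBF interpolant on the node set W (a set of indices): sum over w_k in W of
  c_k C_{e_{j_k}} f, with K_{f,W} c = x|_W.  Coefficients are indexed by the nodes.\<close>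
definition gbf_interp ::
  "nat \<Rightarrow> (nat \<Rightarrow> nat \<Rightarrow> real) \<Rightarrow> (nat \<Rightarrow> real) \<Rightarrow> nat set \<Rightarrow> (nat \<Rightarrow> real) \<Rightarrow> nat \<Rightarrow> real" where
  "gbf_interp n U f W x =
     (let c = (THE c. (\<forall>j. j \<notin> W \<longrightarrow> c j = 0) \<and>
                      (\<forall>k\<in>W. (\<Sum>l\<in>W. gconv n U (unitvec l) f k * c l) = x k))
      in (\<lambda>i. \<Sum>k\<in>W. c k * gconv n U (unitvec k) f i))"

definition bandlim :: "nat \<Rightarrow> (nat \<Rightarrow> nat \<Rightarrow> real) \<Rightarrow> nat \<Rightarrow> (nat \<Rightarrow> real) set" where
  "bandlim n U M = {y. \<exists>a. y = (\<lambda>i. if i \<in> {1..n} then (\<Sum>k=1..M. a k * U i k) else 0)}"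

definition bandproj :: "nat \<Rightarrow> (nat \<Rightarrow> nat \<Rightarrow> real) \<Rightarrow> nat \<Rightarrow> (nat \<Rightarrow> real) \<Rightarrow> nat \<Rightarrow> real" where
  "bandproj n U M x = (\<lambda>i. if i \<in> {1..n} then (\<Sum>k=1..M. gft n U x k * U i k) else 0)"

definition sampling :: "nat set \<Rightarrow> (nat \<Rightarrow> real) \<Rightarrow> nat \<Rightarrow> real" where
  "sampling W x = (\<lambda>i. if i \<in> W then x i else 0)"

definition norming_set :: "nat \<Rightarrow> (nat \<Rightarrow> nat \<Rightarrow> real) \<Rightarrow> nat \<Rightarrow> nat set \<Rightarrow> bool" where
  "norming_set n U M W \<longleftrightarrow> inj_on (sampling W \<circ> bandproj n U M) (bandlim n U M)"

text \<open>Euclidean operator norm of the inverse of S_W B_M restricted to B_M, on its image: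
  sup over nonzero z = S_W B_M y (y in B_M) of ||y|| / ||z||.\<close>
definition inv_sampling_norm :: "nat \<Rightarrow> (nat \<Rightarrow> nat \<Rightarrow> real) \<Rightarrow> nat \<Rightarrow> nat set \<Rightarrow> real" where
  "inv_sampling_norm n U M W =
     Sup {vnorm n y / vnorm n z | y z. y \<in> bandlim n U M \<and>
            z = sampling W (bandproj n U M y) \<and> vnorm n z \<noteq> 0}"

end

theory Submission
  imports Defs "HOL-Analysis.Convex"
begin


locale gs =
  fixes n :: nat and U :: "nat \<Rightarrow> nat \<Rightarrow> real" and f :: "nat \<Rightarrow> real"
  assumes ortho: "\<And>k l. k\<in>{1..n} \<Longrightarrow> l\<in>{1..n} \<Longrightarrow> (\<Sum>i=1..n. U i k * U i l) = (if k = l then 1 else 0)"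
    and pd: "pd_function n U f"
begin

abbreviation "hat \<equiv> gft n U"
abbreviation "fh \<equiv> gft n U f"

lemma gft_unitvec: "j \<in> {1..n} \<Longrightarrow> hat (unitvec j) k = U j k"
  unfolding gft_def unitvec_def by (simp add: if_distrib cong: if_cong)

lemma gconv_unitvec: "j \<in> {1..n} \<Longrightarrow> gconv n U (unitvec j) f i = (\<Sum>k=1..n. U i k * U j k * fh k)"
  unfolding gconv_def by (simp add: gft_unitvec)

lemma gkernel_eq: "j \<in> {1..n} \<Longrightarrow> gkernel n U f i j = (\<Sum>k=1..n. U i k * U j k * fh k)"
  unfolding gkernel_def by (rule gconv_unitvec)

lemma quad: "(\<Sum>i=1..n. \<Sum>j=1..n. x i * gkernel n U f i j * x j) = (\<Sum>k=1..n. fh k * (hat x k)^2)"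
proof -
  have "(\<Sum>i=1..n. \<Sum>j=1..n. x i * gkernel n U f i j * x j)
     = (\<Sum>i=1..n. \<Sum>j=1..n. \<Sum>k=1..n. fh k * (U i k * x i) * (U j k * x j))"
    by (intro sum.cong refl) (simp add: gkernel_eq sum_distrib_left sum_distrib_right algebra_simps)
  also have "\<dots> = (\<Sum>i=1..n. \<Sum>k=1..n. \<Sum>j=1..n. fh k * (U i k * x i) * (U j k * x j))"
    by (rule sum.cong[OF refl], rule sum.swap)
  also have "\<dots> = (\<Sum>k=1..n. \<Sum>i=1..n. \<Sum>j=1..n. fh k * (U i k * x i) * (U j k * x j))"
    by (rule sum.swap)
  also have "\<dots> = (\<Sum>k=1..n. fh k * (hat x k)^2)"
    by (intro sum.cong refl) (simp add: gft_def power2_eq_square sum_distrib_left sum_distrib_right algebra_simps)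
  finally show ?thesis .
qed

lemma hat_recon: "m \<in> {1..n} \<Longrightarrow> hat (\<lambda>i. \<Sum>k=1..n. U i k * b k) m = b m"
proof -
  assume m: "m \<in> {1..n}"
  have "hat (\<lambda>i. \<Sum>k=1..n. U i k * b k) m = (\<Sum>i=1..n. \<Sum>k=1..n. U i m * U i k * b k)"
    unfolding gft_def by (simp add: sum_distrib_left mult.assoc)
  also have "\<dots> = (\<Sum>k=1..n. (\<Sum>i=1..n. U i m * U i k) * b k)"
    by (subst sum.swap) (simp add: sum_distrib_right)
  also have "\<dots> = (\<Sum>k=1..n. (if m = k then b k else 0))"
  proof (intro sum.cong refl)
    fix k assume k: "k \<in> {1..n}"
    show "(\<Sum>i=1..n. U i m * U i k) * b k = (if m = k then b k else 0)"
      using ortho[OF m k] by simp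
  qed
  also have "\<dots> = b m" using m by simp
  finally show ?thesis .
qed

lemma hat_recon_M: "m \<in> {1..n} \<Longrightarrow> M \<le> n \<Longrightarrow> hat (\<lambda>i. \<Sum>k=1..M. U i k * b k) m = (if m \<le> M then b m else 0)"
proof -
  assume m: "m \<in> {1..n}" and M: "M \<le> n"
  have "hat (\<lambda>i. \<Sum>k=1..M. U i k * b k) m = hat (\<lambda>i. \<Sum>k=1..n. U i k * (if k \<le> M then b k else 0)) m"
  proof -
    have e: "{k \<in> {1..n}. k \<le> M} = {1..M}" using M by auto
    have "(\<Sum>k=1..M. U i k * b k) = (\<Sum>k=1..n. U i k * (if k \<le> M then b k else 0))" for i
      using sum.inter_filter[of "{1..n}" "\<lambda>k. U i k * b k" "\<lambda>k. k \<le> M"] e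
      by (simp add: if_distrib mult_zero_right cong: if_cong)
    thus ?thesis by simp
  qed
  also have "\<dots> = (if m \<le> M then b m else 0)" by (rule hat_recon[OF m])
  finally show ?thesis .
qed

lemma fh_pos: "k \<in> {1..n} \<Longrightarrow> fh k > 0"
proof -
  assume k: "k \<in> {1..n}"
  define x where "x = (\<lambda>i. U i k)"
  have hx: "hat x m = (if m = k then 1 else 0)" if "m \<in> {1..n}" for m
    unfolding x_def gft_def using ortho[OF that k] by simp
  have "\<exists>i\<in>{1..n}. x i \<noteq> 0"
  proof (rule ccontr)
    assume "\<not> ?thesis"
    hence "(\<Sum>i=1..n. U i k * U i k) = 0" by (simp add: x_def)
    with ortho[OF k k] show False by simp
  qed
  with pd have "(\<Sum>i=1..n. \<Sum>j=1..n. x i * gkernel n U f i j * x j) > 0"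
    unfolding pd_function_def by blast
  also have "(\<Sum>i=1..n. \<Sum>j=1..n. x i * gkernel n U f i j * x j) = (\<Sum>m=1..n. fh m * (hat x m)^2)"
    by (rule quad)
  also have "\<dots> = (\<Sum>m=1..n. if m = k then fh k else 0)"
    by (intro sum.cong refl) (simp add: hx)
  also have "\<dots> = fh k" using k by simp
  finally show ?thesis .
qed

lemma hat_zero: "(\<And>k. k \<in> {1..n} \<Longrightarrow> hat x k = 0) \<Longrightarrow> i \<in> {1..n} \<Longrightarrow> x i = 0"
proof (rule ccontr)
  assume h: "\<And>k. k \<in> {1..n} \<Longrightarrow> hat x k = 0" and i: "i \<in> {1..n}" and "x i \<noteq> 0"
  with pd have "(\<Sum>i=1..n. \<Sum>j=1..n. x i * gkernel n U f i j * x j) > 0"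
    unfolding pd_function_def by blast
  also have "(\<Sum>i=1..n. \<Sum>j=1..n. x i * gkernel n U f i j * x j) = (\<Sum>m=1..n. fh m * (hat x m)^2)"
    by (rule quad)
  also have "\<dots> = 0" by (simp add: h)
  finally show False by simp
qed

lemma recon: "i \<in> {1..n} \<Longrightarrow> x i = (\<Sum>k=1..n. U i k * hat x k)"
proof -
  assume i: "i \<in> {1..n}"
  define y where "y = (\<lambda>i. x i - (\<Sum>k=1..n. U i k * hat x k))"
  have "hat y m = 0" if m: "m \<in> {1..n}" for m
  proof -
    have "hat y m = hat x m - hat (\<lambda>i. \<Sum>k=1..n. U i k * hat x k) m"
      unfolding y_def gft_def by (simp add: algebra_simps sum_subtractf)
    also have "\<dots> = 0" using hat_recon[OF m, of "hat x"] by simp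
    finally show ?thesis .
  qed
  hence "y i = 0" using hat_zero i by blast
  thus ?thesis by (simp add: y_def)
qed

lemma parseval: "(\<Sum>i=1..n. x i * y i) = (\<Sum>k=1..n. hat x k * hat y k)"
proof -
  have "(\<Sum>i=1..n. x i * y i) = (\<Sum>i=1..n. x i * (\<Sum>k=1..n. U i k * hat y k))"
    using recon[of _ y] by (intro sum.cong refl) simp
  also have "\<dots> = (\<Sum>k=1..n. hat x k * hat y k)"
    unfolding gft_def[of n U x]
    by (simp add: sum_distrib_left sum_distrib_right algebra_simps) (subst sum.swap, simp)
  finally show ?thesis .
qed

lemma rowortho: "i \<in> {1..n} \<Longrightarrow> j \<in> {1..n} \<Longrightarrow> (\<Sum>k=1..n. U i k * U j k) = (if i = j then 1 else 0)"
  using recon[of i "unitvec j"] gft_unitvec[of j] by (simp add: unitvec_def)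

lemma Kmul: "(\<Sum>m=1..n. gkernel n U f i m * z m) = (\<Sum>k=1..n. U i k * (fh k * hat z k))"
proof -
  have "(\<Sum>m=1..n. gkernel n U f i m * z m) = (\<Sum>m=1..n. \<Sum>k=1..n. U i k * fh k * (U m k * z m))"
    by (intro sum.cong refl) (simp add: gkernel_eq sum_distrib_right sum_distrib_left algebra_simps)
  also have "\<dots> = (\<Sum>k=1..n. \<Sum>m=1..n. U i k * fh k * (U m k * z m))" by (rule sum.swap)
  also have "\<dots> = (\<Sum>k=1..n. U i k * (fh k * hat z k))"
    by (intro sum.cong refl) (simp add: gft_def sum_distrib_left algebra_simps)
  finally show ?thesis .
qed

lemma hat_Kmul: "m \<in> {1..n} \<Longrightarrow> hat (\<lambda>i. \<Sum>l=1..n. gkernel n U f i l * z l) m = fh m * hat z m"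
proof -
  assume m: "m \<in> {1..n}"
  have "(\<lambda>i. \<Sum>l=1..n. gkernel n U f i l * z l) = (\<lambda>i. \<Sum>k=1..n. U i k * (fh k * hat z k))"
    by (rule ext, rule Kmul)
  thus ?thesis using hat_recon[OF m, of "\<lambda>k. fh k * hat z k"] by simp
qed

lemma K_inj: "(\<And>i. i \<in> {1..n} \<Longrightarrow> (\<Sum>m=1..n. gkernel n U f i m * z m) = 0) \<Longrightarrow> j \<in> {1..n} \<Longrightarrow> z j = 0"
proof -
  assume h: "\<And>i. i \<in> {1..n} \<Longrightarrow> (\<Sum>m=1..n. gkernel n U f i m * z m) = 0" and j: "j \<in> {1..n}"
  have "hat z k = 0" if k: "k \<in> {1..n}" for k
  proof -
    have "fh k * hat z k = hat (\<lambda>i. \<Sum>l=1..n. gkernel n U f i l * z l) k" using hat_Kmul[OF k] by simp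
    also have "\<dots> = 0" unfolding gft_def using h by simp
    finally show ?thesis using fh_pos[OF k] by simp
  qed
  thus ?thesis using hat_zero j by blast
qed

definition "Binv = (\<lambda>i j. if i \<in> {1..n} \<and> j \<in> {1..n} then (\<Sum>k=1..n. U i k * (U j k / fh k)) else 0)"

lemma Binv_prop: "i \<in> {1..n} \<Longrightarrow> j \<in> {1..n} \<Longrightarrow> (\<Sum>m=1..n. gkernel n U f i m * Binv m j) = (if i = j then 1 else 0)"
proof -
  assume i: "i \<in> {1..n}" and j: "j \<in> {1..n}"
  have hz: "hat (\<lambda>m. Binv m j) k = U j k / fh k" if k: "k \<in> {1..n}" for k
  proof -
    have "hat (\<lambda>m. Binv m j) k = hat (\<lambda>m. \<Sum>k=1..n. U m k * (U j k / fh k)) k"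
      unfolding gft_def Binv_def using j by (intro sum.cong refl) auto
    also have "\<dots> = U j k / fh k" by (rule hat_recon[OF k])
    finally show ?thesis .
  qed
  have "(\<Sum>m=1..n. gkernel n U f i m * Binv m j) = (\<Sum>k=1..n. U i k * (fh k * hat (\<lambda>m. Binv m j) k))"
    by (rule Kmul)
  also have "\<dots> = (\<Sum>k=1..n. U i k * U j k)"
  proof (intro sum.cong refl)
    fix k assume k: "k \<in> {1..n}"
    show "U i k * (fh k * hat (\<lambda>m. Binv m j) k) = U i k * U j k"
      using hz[OF k] fh_pos[OF k] by simp
  qed
  also have "\<dots> = (if i = j then 1 else 0)" by (rule rowortho[OF i j])
  finally show ?thesis .
qed

lemma mat_inv_eq: "mat_inv_on n (gkernel n U f) = Binv"
  unfolding mat_inv_on_def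
proof (rule the_equality)
  show "(\<forall>i j. (i \<notin> {1..n} \<or> j \<notin> {1..n}) \<longrightarrow> Binv i j = 0) \<and>
     (\<forall>i\<in>{1..n}. \<forall>j\<in>{1..n}. (\<Sum>k=1..n. gkernel n U f i k * Binv k j) = (if i = j then 1 else 0))"
    using Binv_prop by (auto simp: Binv_def)
next
  fix B assume B: "(\<forall>i j. (i \<notin> {1..n} \<or> j \<notin> {1..n}) \<longrightarrow> B i j = 0) \<and>
     (\<forall>i\<in>{1..n}. \<forall>j\<in>{1..n}. (\<Sum>k=1..n. gkernel n U f i k * B k j) = (if i = j then 1 else 0))"
  show "B = Binv"
  proof (intro ext)
    fix a j
    show "B a j = Binv a j"
    proof (cases "a \<in> {1..n} \<and> j \<in> {1..n}")
      case False thus ?thesis using B by (auto simp: Binv_def)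
    next
      case True
      have "\<forall>i\<in>{1..n}. (\<Sum>m=1..n. gkernel n U f i m * (B m j - Binv m j)) = 0"
      proof
        fix i assume i: "i \<in> {1..n}"
        have "(\<Sum>m=1..n. gkernel n U f i m * (B m j - Binv m j))
           = (\<Sum>m=1..n. gkernel n U f i m * B m j) - (\<Sum>m=1..n. gkernel n U f i m * Binv m j)"
          by (simp add: algebra_simps sum_subtractf)
        also have "\<dots> = 0" using B Binv_prop[OF i] True i by simp
        finally show "(\<Sum>m=1..n. gkernel n U f i m * (B m j - Binv m j)) = 0" .
      qed
      hence "B a j - Binv a j = 0" using K_inj[of "\<lambda>m. B m j - Binv m j" a] True by blast
      thus ?thesis by simp
    qed
  qed
qed

lemma native_eq: "native_norm n U f x = sqrt (\<Sum>k=1..n. (hat x k)^2 / fh k)"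
proof -
  have "(\<Sum>i=1..n. \<Sum>j=1..n. x i * Binv i j * x j)
     = (\<Sum>i=1..n. \<Sum>j=1..n. \<Sum>k=1..n. (U i k * x i) * (U j k * x j) / fh k)"
    by (intro sum.cong refl) (simp add: Binv_def sum_distrib_left sum_distrib_right algebra_simps)
  also have "\<dots> = (\<Sum>i=1..n. \<Sum>k=1..n. \<Sum>j=1..n. (U i k * x i) * (U j k * x j) / fh k)"
    by (rule sum.cong[OF refl], rule sum.swap)
  also have "\<dots> = (\<Sum>k=1..n. \<Sum>i=1..n. \<Sum>j=1..n. (U i k * x i) * (U j k * x j) / fh k)"
    by (rule sum.swap)
  also have "\<dots> = (\<Sum>k=1..n. (hat x k)^2 / fh k)"
    by (intro sum.cong refl) (simp add: gft_def power2_eq_square sum_distrib_left sum_distrib_right sum_divide_distrib algebra_simps)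
  finally have e: "(\<Sum>i=1..n. \<Sum>j=1..n. x i * Binv i j * x j) = (\<Sum>k=1..n. (hat x k)^2 / fh k)" .
  thus ?thesis unfolding native_norm_def mat_inv_eq by simp
qed

lemma native_sq: "(native_norm n U f x)^2 = (\<Sum>k=1..n. (hat x k)^2 / fh k)"
proof -
  have "0 \<le> (\<Sum>k=1..n. (hat x k)^2 / fh k)"
    by (intro sum_nonneg) (use fh_pos in \<open>auto intro!: divide_nonneg_pos\<close>)
  thus ?thesis unfolding native_eq by simp
qed

lemma native_nonneg: "native_norm n U f x \<ge> 0"
proof -
  have "0 \<le> (\<Sum>k=1..n. (hat x k)^2 / fh k)"
    by (intro sum_nonneg) (use fh_pos in \<open>auto intro!: divide_nonneg_pos\<close>)
  thus ?thesis unfolding native_eq by simp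
qed

end

lemma pd_solve:
  fixes G :: "nat \<Rightarrow> nat \<Rightarrow> real"
  assumes "finite S"
    and "\<forall>i\<in>S. \<forall>j\<in>S. G i j = G j i"
    and "\<forall>c. (\<exists>i\<in>S. c i \<noteq> 0) \<longrightarrow> (\<Sum>i\<in>S. \<Sum>j\<in>S. c i * G i j * c j) > 0"
  shows "\<exists>c. (\<forall>j. j \<notin> S \<longrightarrow> c j = 0) \<and> (\<forall>k\<in>S. (\<Sum>l\<in>S. G k l * c l) = r k)"
  using assms
proof (induction S arbitrary: r rule: finite_induct)
  case empty
  show ?case by (rule exI[of _ "\<lambda>_. 0"]) simp
next
  case (insert w S)
  have symS: "\<forall>i\<in>S. \<forall>j\<in>S. G i j = G j i" using insert.prems(1) by blast
  have pdS: "\<forall>c. (\<exists>i\<in>S. c i \<noteq> 0) \<longrightarrow> (\<Sum>i\<in>S. \<Sum>j\<in>S. c i * G i j * c j) > 0"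
  proof (intro allI impI)
    fix c :: "nat \<Rightarrow> real" assume "\<exists>i\<in>S. c i \<noteq> 0"
    define c' where "c' = (\<lambda>j. if j \<in> S then c j else 0)"
    have "\<exists>i\<in>insert w S. c' i \<noteq> 0" using \<open>\<exists>i\<in>S. c i \<noteq> 0\<close> by (auto simp: c'_def)
    hence "(\<Sum>i\<in>insert w S. \<Sum>j\<in>insert w S. c' i * G i j * c' j) > 0" using insert.prems(2) by blast
    also have "(\<Sum>i\<in>insert w S. \<Sum>j\<in>insert w S. c' i * G i j * c' j) = (\<Sum>i\<in>S. \<Sum>j\<in>S. c i * G i j * c j)"
      using insert.hyps by (simp add: c'_def sum.insert)
    finally show "(\<Sum>i\<in>S. \<Sum>j\<in>S. c i * G i j * c j) > 0" .
  qed
  obtain p where p0: "\<forall>j. j \<notin> S \<longrightarrow> p j = 0" and p: "\<forall>k\<in>S. (\<Sum>l\<in>S. G k l * p l) = r k"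
    using insert.IH[OF symS pdS] by blast
  obtain q where q0: "\<forall>j. j \<notin> S \<longrightarrow> q j = 0" and q: "\<forall>k\<in>S. (\<Sum>l\<in>S. G k l * q l) = G k w"
    using insert.IH[OF symS pdS, of "\<lambda>k. G k w"] by blast
  define d where "d = G w w - (\<Sum>l\<in>S. G w l * q l)"
  define v where "v = (\<lambda>j. if j = w then 1 else if j \<in> S then - q j else (0::real))"
  have "\<exists>i\<in>insert w S. v i \<noteq> 0" by (auto simp: v_def)
  hence "(\<Sum>i\<in>insert w S. \<Sum>j\<in>insert w S. v i * G i j * v j) > 0" using insert.prems(2) by blast
  also have "(\<Sum>i\<in>insert w S. \<Sum>j\<in>insert w S. v i * G i j * v j)
     = G w w - (\<Sum>j\<in>S. G w j * q j) - (\<Sum>i\<in>S. q i * G i w) + (\<Sum>i\<in>S. q i * (\<Sum>j\<in>S. G i j * q j))"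
  proof -
    have vS: "\<And>i. i \<in> S \<Longrightarrow> v i = - q i" and vw: "v w = 1" using insert.hyps by (auto simp: v_def)
    have "(\<Sum>i\<in>insert w S. \<Sum>j\<in>insert w S. v i * G i j * v j)
       = G w w + (\<Sum>j\<in>S. G w j * v j) + ((\<Sum>i\<in>S. v i * G i w) + (\<Sum>i\<in>S. \<Sum>j\<in>S. v i * G i j * v j))"
      using insert.hyps by (simp add: sum.insert vw sum.distrib)
    also have "(\<Sum>j\<in>S. G w j * v j) = (\<Sum>j\<in>S. - (G w j * q j))"
      by (intro sum.cong refl) (simp add: vS)
    also have "(\<Sum>i\<in>S. v i * G i w) = (\<Sum>i\<in>S. - (q i * G i w))"
      by (intro sum.cong refl) (simp add: vS)
    also have "(\<Sum>i\<in>S. \<Sum>j\<in>S. v i * G i j * v j) = (\<Sum>i\<in>S. q i * (\<Sum>j\<in>S. G i j * q j))"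
      by (intro sum.cong refl) (simp add: vS sum_distrib_left mult.assoc mult.left_commute)
    finally show ?thesis by (simp add: sum_negf)
  qed
  also have "(\<Sum>i\<in>S. q i * (\<Sum>j\<in>S. G i j * q j)) = (\<Sum>i\<in>S. q i * G i w)"
    using q by simp
  also have "(\<Sum>i\<in>S. q i * G i w) = (\<Sum>j\<in>S. G w j * q j)"
  proof (intro sum.cong refl)
    fix i assume "i \<in> S"
    hence "G i w = G w i" using insert.prems(1) by blast
    thus "q i * G i w = G w i * q i" by simp
  qed
  finally have dpos: "d > 0" by (simp add: d_def)
  define \<beta> where "\<beta> = (r w - (\<Sum>l\<in>S. G w l * p l)) / d"
  define c where "c = (\<lambda>j. if j = w then \<beta> else p j - \<beta> * q j)"
  show ?case
  proof (intro exI[of _ c] conjI allI impI ballI)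
    fix j assume "j \<notin> insert w S" thus "c j = 0" using p0 q0 by (auto simp: c_def)
  next
    fix k assume k: "k \<in> insert w S"
    have e: "(\<Sum>l\<in>insert w S. G k l * c l) = G k w * \<beta> + (\<Sum>l\<in>S. G k l * p l) - \<beta> * (\<Sum>l\<in>S. G k l * q l)"
    proof -
      have "(\<Sum>l\<in>insert w S. G k l * c l) = G k w * \<beta> + (\<Sum>l\<in>S. G k l * c l)"
        using insert.hyps by (simp add: sum.insert c_def)
      also have "(\<Sum>l\<in>S. G k l * c l) = (\<Sum>l\<in>S. G k l * p l - \<beta> * (G k l * q l))"
        using insert.hyps by (intro sum.cong refl) (auto simp: c_def right_diff_distrib)
      also have "\<dots> = (\<Sum>l\<in>S. G k l * p l) - \<beta> * (\<Sum>l\<in>S. G k l * q l)"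
        by (simp add: sum_subtractf sum_distrib_left)
      finally show ?thesis by simp
    qed
    show "(\<Sum>l\<in>insert w S. G k l * c l) = r k"
    proof (cases "k = w")
      case True
      have "G w w * \<beta> - \<beta> * (\<Sum>l\<in>S. G w l * q l) = \<beta> * d" by (simp add: d_def algebra_simps)
      also have "\<dots> = r w - (\<Sum>l\<in>S. G w l * p l)" using dpos by (simp add: \<beta>_def)
      finally show ?thesis using e True by simp
    next
      case False
      hence "k \<in> S" using k by simp
      thus ?thesis using e p q by simp
    qed
  qed
qed


lemma sumW: "finite A \<Longrightarrow> W \<subseteq> A \<Longrightarrow> (\<And>i. i \<in> A \<Longrightarrow> i \<notin> W \<Longrightarrow> g i = 0) \<Longrightarrow> sum g A = sum g W"
  by (rule sum.mono_neutral_right) auto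



locale gs2 = gs +
  fixes W :: "nat set" and M :: nat
  assumes W_sub: "W \<subseteq> {1..n}" and M1: "1 \<le> M" and Mn: "M \<le> n"
    and norming: "norming_set n U M W"
begin

definition "ymk \<alpha> = (\<lambda>i. if i \<in> {1..n} then (\<Sum>k=1..M. \<alpha> k * U i k) else 0)"

lemma finW: "finite W" using W_sub finite_subset by blast

lemma hat_ymk: "k \<in> {1..n} \<Longrightarrow> hat (ymk \<alpha>) k = (if k \<le> M then \<alpha> k else 0)"
proof -
  assume k: "k \<in> {1..n}"
  have "hat (ymk \<alpha>) k = hat (\<lambda>i. \<Sum>l=1..M. U i l * \<alpha> l) k"
    unfolding gft_def ymk_def by (intro sum.cong refl) (simp add: mult.commute)
  also have "\<dots> = (if k \<le> M then \<alpha> k else 0)" by (rule hat_recon_M[OF k Mn])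
  finally show ?thesis .
qed

lemma ymk_sq: "(\<Sum>i=1..n. (ymk \<alpha> i)^2) = (\<Sum>k=1..M. (\<alpha> k)^2)"
proof -
  have "(\<Sum>i=1..n. (ymk \<alpha> i)^2) = (\<Sum>k=1..n. hat (ymk \<alpha>) k * hat (ymk \<alpha>) k)"
    using parseval[of "ymk \<alpha>" "ymk \<alpha>"] by (simp add: power2_eq_square)
  also have "\<dots> = (\<Sum>k=1..n. if k \<le> M then (\<alpha> k)^2 else 0)"
  proof (intro sum.cong refl)
    fix k assume k: "k \<in> {1..n}" show "hat (ymk \<alpha>) k * hat (ymk \<alpha>) k = (if k \<le> M then (\<alpha> k)^2 else 0)"
      using hat_ymk[OF k] by (simp add: power2_eq_square)
  qed
  also have "\<dots> = (\<Sum>k\<in>{k\<in>{1..n}. k \<le> M}. (\<alpha> k)^2)"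
    using sum.inter_filter[of "{1..n}" "\<lambda>k. (\<alpha> k)^2" "\<lambda>k. k \<le> M"] by simp
  also have "{k\<in>{1..n}. k \<le> M} = {1..M}" using Mn by auto
  finally show ?thesis .
qed

lemma ymk_bandlim: "ymk \<alpha> \<in> bandlim n U M"
  unfolding bandlim_def ymk_def by blast

lemma bandlim_ymk: "y \<in> bandlim n U M \<Longrightarrow> \<exists>\<alpha>. y = ymk \<alpha>"
  unfolding bandlim_def ymk_def by blast

lemma bandproj_ymk: "bandproj n U M (ymk \<alpha>) = ymk \<alpha>"
proof (rule ext)
  fix i
  show "bandproj n U M (ymk \<alpha>) i = ymk \<alpha> i"
  proof (cases "i \<in> {1..n}")
    case True
    have "(\<Sum>k=1..M. hat (ymk \<alpha>) k * U i k) = (\<Sum>k=1..M. \<alpha> k * U i k)"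
    proof (intro sum.cong refl)
      fix k assume "k \<in> {1..M}" hence "k \<in> {1..n}" "k \<le> M" using Mn by auto
      thus "hat (ymk \<alpha>) k * U i k = \<alpha> k * U i k" using hat_ymk by simp
    qed
    moreover have "bandproj n U M (ymk \<alpha>) i = (\<Sum>k=1..M. hat (ymk \<alpha>) k * U i k)"
      using True by (simp add: bandproj_def)
    moreover have "ymk \<alpha> i = (\<Sum>k=1..M. \<alpha> k * U i k)" using True by (simp add: ymk_def)
    ultimately show ?thesis by simp
  next
    case False
    hence "bandproj n U M (ymk \<alpha>) i = 0" unfolding bandproj_def by auto
    moreover have "ymk \<alpha> i = 0" using False unfolding ymk_def by auto
    ultimately show ?thesis by simp
  qed
qed

lemma vnorm_sampling: "(vnorm n (sampling W y))^2 = (\<Sum>w\<in>W. (y w)^2)"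
proof -
  have "(\<Sum>i=1..n. (sampling W y i)^2) = (\<Sum>i\<in>W. (sampling W y i)^2)"
    by (rule sumW) (use W_sub in \<open>auto simp: sampling_def\<close>)
  also have "\<dots> = (\<Sum>w\<in>W. (y w)^2)" by (simp add: sampling_def)
  finally show ?thesis unfolding vnorm_def by (simp add: sum_nonneg)
qed

lemma vnorm_ymk: "(vnorm n (ymk \<alpha>))^2 = (\<Sum>k=1..M. (\<alpha> k)^2)"
  unfolding vnorm_def using ymk_sq[of \<alpha>] by (simp add: sum_nonneg)

lemma vnorm_ymk': "vnorm n (ymk \<alpha>) = sqrt (\<Sum>k=1..M. (\<alpha> k)^2)"
  unfolding vnorm_def ymk_sq ..

lemma vnorm_sampling': "vnorm n (sampling W y) = sqrt (\<Sum>w\<in>W. (y w)^2)"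
proof -
  have "(\<Sum>i=1..n. (sampling W y i)^2) = (\<Sum>i\<in>W. (sampling W y i)^2)"
    by (rule sumW) (use W_sub in \<open>auto simp: sampling_def\<close>)
  also have "\<dots> = (\<Sum>w\<in>W. (y w)^2)" by (simp add: sampling_def)
  finally show ?thesis unfolding vnorm_def by simp
qed

definition "Gm k l = (\<Sum>w\<in>W. U w k * U w l)"

lemma ymk_W: "w \<in> W \<Longrightarrow> ymk \<alpha> w = (\<Sum>k=1..M. \<alpha> k * U w k)"
  using W_sub by (auto simp: ymk_def)

lemma Gm_quad: "(\<Sum>i=1..M. \<Sum>j=1..M. \<alpha> i * Gm i j * \<alpha> j) = (\<Sum>w\<in>W. (ymk \<alpha> w)^2)"
proof -
  have "(\<Sum>i=1..M. \<Sum>j=1..M. \<alpha> i * Gm i j * \<alpha> j) = (\<Sum>i=1..M. \<Sum>j=1..M. \<Sum>w\<in>W. (\<alpha> i * U w i) * (\<alpha> j * U w j))"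
    by (intro sum.cong refl) (simp add: Gm_def sum_distrib_left sum_distrib_right algebra_simps)
  also have "\<dots> = (\<Sum>i=1..M. \<Sum>w\<in>W. \<Sum>j=1..M. (\<alpha> i * U w i) * (\<alpha> j * U w j))"
    by (rule sum.cong[OF refl], rule sum.swap)
  also have "\<dots> = (\<Sum>w\<in>W. \<Sum>i=1..M. \<Sum>j=1..M. (\<alpha> i * U w i) * (\<alpha> j * U w j))"
    by (rule sum.swap)
  also have "\<dots> = (\<Sum>w\<in>W. (ymk \<alpha> w)^2)"
  proof (intro sum.cong refl)
    fix w assume "w \<in> W"
    thus "(\<Sum>i=1..M. \<Sum>j=1..M. (\<alpha> i * U w i) * (\<alpha> j * U w j)) = (ymk \<alpha> w)^2"
      by (simp add: ymk_W power2_eq_square sum_product)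
  qed
  finally show ?thesis .
qed

lemma ymk_W_zero: "(\<Sum>w\<in>W. (ymk \<alpha> w)^2) = 0 \<Longrightarrow> k \<in> {1..M} \<Longrightarrow> \<alpha> k = 0"
proof -
  assume z: "(\<Sum>w\<in>W. (ymk \<alpha> w)^2) = 0" and k: "k \<in> {1..M}"
  have "\<forall>w\<in>W. (ymk \<alpha> w)^2 = 0" using z finW by (subst (asm) sum_nonneg_eq_0_iff) auto
  hence "sampling W (ymk \<alpha>) = sampling W (ymk (\<lambda>_. 0))"
    by (auto simp: sampling_def ymk_def)
  hence s: "sampling W (bandproj n U M (ymk \<alpha>)) = sampling W (bandproj n U M (ymk (\<lambda>_. 0)))"
    by (simp only: bandproj_ymk)
  have "ymk \<alpha> = ymk (\<lambda>_. 0)"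
    using norming s ymk_bandlim unfolding norming_set_def inj_on_def by auto
  hence "hat (ymk \<alpha>) k = hat (ymk (\<lambda>_. 0)) k" by simp
  moreover have "k \<in> {1..n}" "k \<le> M" using k Mn by auto
  ultimately show ?thesis using hat_ymk by simp
qed

lemma Gm_pd: "\<forall>c. (\<exists>i\<in>{1..M}. c i \<noteq> 0) \<longrightarrow> (\<Sum>i\<in>{1..M}. \<Sum>j\<in>{1..M}. c i * Gm i j * c j) > 0"
proof (intro allI impI)
  fix c :: "nat \<Rightarrow> real" assume "\<exists>i\<in>{1..M}. c i \<noteq> 0"
  hence "(\<Sum>w\<in>W. (ymk c w)^2) \<noteq> 0" using ymk_W_zero by blast
  moreover have "(\<Sum>w\<in>W. (ymk c w)^2) \<ge> 0" by (simp add: sum_nonneg)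
  ultimately show "(\<Sum>i\<in>{1..M}. \<Sum>j\<in>{1..M}. c i * Gm i j * c j) > 0" using Gm_quad by simp
qed

lemma Gm_sym: "\<forall>i\<in>{1..M}. \<forall>j\<in>{1..M}. Gm i j = Gm j i"
  by (simp add: Gm_def mult.commute)


lemma bdd_const: "\<exists>Cst. \<forall>\<alpha>. (\<Sum>k=1..M. (\<alpha> k)^2) \<le> Cst * (\<Sum>w\<in>W. (ymk \<alpha> w)^2)"
proof -
  have "\<forall>j\<in>{1..M}. \<exists>hj. \<forall>k\<in>{1..M}. (\<Sum>l\<in>{1..M}. Gm k l * hj l) = (if k = j then 1 else 0)"
  proof
    fix j
    show "\<exists>hj. \<forall>k\<in>{1..M}. (\<Sum>l\<in>{1..M}. Gm k l * hj l) = (if k = j then 1 else 0)"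
      using pd_solve[OF _ Gm_sym Gm_pd, of "\<lambda>k. if k = j then 1 else 0"] by blast
  qed
  then obtain h where h: "\<And>j k. j\<in>{1..M} \<Longrightarrow> k\<in>{1..M} \<Longrightarrow> (\<Sum>l\<in>{1..M}. Gm k l * h j l) = (if k = j then 1 else 0)"
    using bchoice[of "{1..M}"] by metis
  define g where "g j w = (\<Sum>l=1..M. U w l * h j l)" for j w
  define Cst where "Cst = (\<Sum>j=1..M. \<Sum>w\<in>W. (g j w)^2)"
  have rep: "\<alpha> j = (\<Sum>w\<in>W. ymk \<alpha> w * g j w)" if j: "j \<in> {1..M}" for \<alpha> j
  proof -
    have "(\<Sum>k=1..M. (if k = j then 1 else 0) * \<alpha> k) = (\<Sum>k=1..M. if k = j then \<alpha> k else 0)"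
      by (intro sum.cong refl) simp
    also have "\<dots> = \<alpha> j" using j by (simp add: sum.delta')
    finally have "\<alpha> j = (\<Sum>k=1..M. (if k = j then 1 else 0) * \<alpha> k)" by simp
    also have "\<dots> = (\<Sum>k=1..M. (\<Sum>l=1..M. Gm k l * h j l) * \<alpha> k)"
    proof (intro sum.cong refl)
      fix k assume k: "k \<in> {1..M}"
      show "(if k = j then 1 else 0) * \<alpha> k = (\<Sum>l=1..M. Gm k l * h j l) * \<alpha> k"
        using h[OF j k] by simp
    qed
    also have "\<dots> = (\<Sum>k=1..M. \<Sum>l=1..M. \<Sum>w\<in>W. (\<alpha> k * U w k) * (U w l * h j l))"
      by (simp add: Gm_def sum_distrib_left sum_distrib_right algebra_simps)
    also have "\<dots> = (\<Sum>k=1..M. \<Sum>w\<in>W. \<Sum>l=1..M. (\<alpha> k * U w k) * (U w l * h j l))"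
      by (rule sum.cong[OF refl], rule sum.swap)
    also have "\<dots> = (\<Sum>w\<in>W. \<Sum>k=1..M. \<Sum>l=1..M. (\<alpha> k * U w k) * (U w l * h j l))"
      by (rule sum.swap)
    also have "\<dots> = (\<Sum>w\<in>W. ymk \<alpha> w * g j w)"
    proof (intro sum.cong refl)
      fix w assume "w \<in> W"
      thus "(\<Sum>k=1..M. \<Sum>l=1..M. (\<alpha> k * U w k) * (U w l * h j l)) = ymk \<alpha> w * g j w"
        by (simp add: ymk_W g_def sum_product)
    qed
    finally show ?thesis .
  qed
  show ?thesis
  proof (intro exI allI)
    fix \<alpha> :: "nat \<Rightarrow> real"
    have "(\<Sum>k=1..M. (\<alpha> k)^2) \<le> (\<Sum>k=1..M. (\<Sum>w\<in>W. (ymk \<alpha> w)^2) * (\<Sum>w\<in>W. (g k w)^2))"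
    proof (rule sum_mono)
      fix k assume k: "k \<in> {1..M}"
      show "(\<alpha> k)^2 \<le> (\<Sum>w\<in>W. (ymk \<alpha> w)^2) * (\<Sum>w\<in>W. (g k w)^2)"
        using rep[OF k] Cauchy_Schwarz_ineq_sum[of "ymk \<alpha>" "g k" W] by simp
    qed
    also have "\<dots> = Cst * (\<Sum>w\<in>W. (ymk \<alpha> w)^2)"
      by (simp add: Cst_def sum_distrib_left sum_distrib_right mult.commute)
    finally show "(\<Sum>k=1..M. (\<alpha> k)^2) \<le> Cst * (\<Sum>w\<in>W. (ymk \<alpha> w)^2)" .
  qed
qed

abbreviation "NN \<equiv> inv_sampling_norm n U M W"

definition "RS = {vnorm n y / vnorm n z | y z. y \<in> bandlim n U M \<and>
            z = sampling W (bandproj n U M y) \<and> vnorm n z \<noteq> 0}"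

lemma NN_def': "NN = Sup RS" unfolding inv_sampling_norm_def RS_def by simp

lemma RS_elem: "r \<in> RS \<Longrightarrow> \<exists>\<alpha>. r = sqrt (\<Sum>k=1..M. (\<alpha> k)^2) / sqrt (\<Sum>w\<in>W. (ymk \<alpha> w)^2) \<and> (\<Sum>w\<in>W. (ymk \<alpha> w)^2) \<noteq> 0"
proof -
  assume "r \<in> RS"
  then obtain y where y: "y \<in> bandlim n U M" and r: "r = vnorm n y / vnorm n (sampling W (bandproj n U M y))"
    and nz: "vnorm n (sampling W (bandproj n U M y)) \<noteq> 0" unfolding RS_def by blast
  obtain \<alpha> where ya: "y = ymk \<alpha>" using bandlim_ymk[OF y] by blast
  have v1: "vnorm n y = sqrt (\<Sum>k=1..M. (\<alpha> k)^2)"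
    using vnorm_ymk'[of \<alpha>] ya by simp
  have v2: "vnorm n (sampling W (bandproj n U M y)) = sqrt (\<Sum>w\<in>W. (ymk \<alpha> w)^2)"
    using vnorm_sampling'[of "ymk \<alpha>"] ya bandproj_ymk by simp
  show ?thesis using r nz v1 v2 by auto
qed

lemma RS_in: "(\<Sum>w\<in>W. (ymk \<alpha> w)^2) \<noteq> 0 \<Longrightarrow> sqrt (\<Sum>k=1..M. (\<alpha> k)^2) / sqrt (\<Sum>w\<in>W. (ymk \<alpha> w)^2) \<in> RS"
proof -
  assume nz: "(\<Sum>w\<in>W. (ymk \<alpha> w)^2) \<noteq> 0"
  have v1: "vnorm n (ymk \<alpha>) = sqrt (\<Sum>k=1..M. (\<alpha> k)^2)"
    using vnorm_ymk'[of \<alpha>] by simp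
  have v2: "vnorm n (sampling W (bandproj n U M (ymk \<alpha>))) = sqrt (\<Sum>w\<in>W. (ymk \<alpha> w)^2)"
    using vnorm_sampling'[of "ymk \<alpha>"] bandproj_ymk by simp
  show ?thesis unfolding RS_def
    by (intro CollectI exI[of _ "ymk \<alpha>"] exI[of _ "sampling W (bandproj n U M (ymk \<alpha>))"])
       (use v1 v2 nz ymk_bandlim in auto)
qed

lemma RS_bdd: "bdd_above RS"
proof -
  obtain Cst where C: "\<And>\<alpha>. (\<Sum>k=1..M. (\<alpha> k)^2) \<le> Cst * (\<Sum>w\<in>W. (ymk \<alpha> w)^2)" using bdd_const by blast
  show ?thesis
  proof (rule bdd_aboveI)
    fix r assume "r \<in> RS"
    then obtain \<alpha> where r: "r = sqrt (\<Sum>k=1..M. (\<alpha> k)^2) / sqrt (\<Sum>w\<in>W. (ymk \<alpha> w)^2)"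
      and nz: "(\<Sum>w\<in>W. (ymk \<alpha> w)^2) \<noteq> 0" using RS_elem by blast
    have p: "(\<Sum>w\<in>W. (ymk \<alpha> w)^2) > 0" using nz by (simp add: order_le_neq_trans sum_nonneg)
    have C0: "Cst \<ge> 0"
    proof (rule ccontr)
      assume "\<not> Cst \<ge> 0"
      hence "Cst * (\<Sum>w\<in>W. (ymk \<alpha> w)^2) < 0" using p by (simp add: mult_neg_pos)
      moreover have "(\<Sum>k=1..M. (\<alpha> k)^2) \<ge> 0" by (simp add: sum_nonneg)
      ultimately show False using C[of \<alpha>] by linarith
    qed
    have "sqrt (\<Sum>k=1..M. (\<alpha> k)^2) \<le> sqrt (Cst * (\<Sum>w\<in>W. (ymk \<alpha> w)^2))"
      using C by (rule real_sqrt_le_mono)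
    also have "\<dots> = sqrt \<bar>Cst\<bar> * sqrt (\<Sum>w\<in>W. (ymk \<alpha> w)^2)"
      using C0 by (simp add: real_sqrt_mult)
    finally show "r \<le> sqrt \<bar>Cst\<bar>" using p by (simp add: r divide_le_eq)
  qed
qed

lemma RS_ne: "RS \<noteq> {}"
proof -
  define \<alpha> where "\<alpha> = (\<lambda>k. if k = (1::nat) then (1::real) else 0)"
  have "(\<Sum>w\<in>W. (ymk \<alpha> w)^2) \<noteq> 0"
  proof
    assume "(\<Sum>w\<in>W. (ymk \<alpha> w)^2) = 0"
    hence "\<alpha> 1 = 0" using ymk_W_zero M1 by auto
    thus False by (simp add: \<alpha>_def)
  qed
  thus ?thesis using RS_in by blast
qed

lemma NN_nonneg: "NN \<ge> 0"
proof -
  obtain r where "r \<in> RS" using RS_ne by blast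
  moreover have "r \<ge> 0" using RS_elem[OF \<open>r \<in> RS\<close>]
    by (force intro!: divide_nonneg_nonneg real_sqrt_ge_zero sum_nonneg)
  ultimately show ?thesis unfolding NN_def' using RS_bdd by (meson cSup_upper order_trans)
qed

lemma NN_bound: "(\<Sum>w\<in>W. (ymk \<alpha> w)^2) \<noteq> 0 \<Longrightarrow> sqrt (\<Sum>k=1..M. (\<alpha> k)^2) \<le> NN * sqrt (\<Sum>w\<in>W. (ymk \<alpha> w)^2)"
proof -
  assume nz: "(\<Sum>w\<in>W. (ymk \<alpha> w)^2) \<noteq> 0"
  have p: "(\<Sum>w\<in>W. (ymk \<alpha> w)^2) > 0" using nz by (simp add: order_le_neq_trans sum_nonneg)
  have "sqrt (\<Sum>k=1..M. (\<alpha> k)^2) / sqrt (\<Sum>w\<in>W. (ymk \<alpha> w)^2) \<le> NN"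
    unfolding NN_def' using RS_in[OF nz] RS_bdd by (rule cSup_upper)
  thus ?thesis using p by (simp add: divide_le_eq mult.commute)
qed


lemma G_sym: "\<forall>i\<in>W. \<forall>j\<in>W. gconv n U (unitvec j) f i = gconv n U (unitvec i) f j"
proof (intro ballI)
  fix i j assume i: "i \<in> W" and j: "j \<in> W"
  hence "i \<in> {1..n}" "j \<in> {1..n}" using W_sub by auto
  thus "gconv n U (unitvec j) f i = gconv n U (unitvec i) f j"
    by (simp add: gconv_unitvec mult.commute mult.left_commute)
qed

lemma G_quad: "(\<forall>j. j \<notin> W \<longrightarrow> c j = 0) \<Longrightarrow>
   (\<Sum>i\<in>W. \<Sum>j\<in>W. c i * gconv n U (unitvec j) f i * c j) = (\<Sum>i=1..n. \<Sum>j=1..n. c i * gkernel n U f i j * c j)"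
proof -
  assume c0: "\<forall>j. j \<notin> W \<longrightarrow> c j = 0"
  have "(\<Sum>i=1..n. \<Sum>j=1..n. c i * gkernel n U f i j * c j) = (\<Sum>i\<in>W. \<Sum>j=1..n. c i * gkernel n U f i j * c j)"
    by (rule sumW) (use W_sub c0 in auto)
  also have "\<dots> = (\<Sum>i\<in>W. \<Sum>j\<in>W. c i * gkernel n U f i j * c j)"
    by (intro sum.cong refl sumW) (use W_sub c0 in auto)
  also have "\<dots> = (\<Sum>i\<in>W. \<Sum>j\<in>W. c i * gconv n U (unitvec j) f i * c j)"
    by (simp add: gkernel_def)
  finally show ?thesis by simp
qed

lemma G_pd: "\<forall>c. (\<exists>i\<in>W. c i \<noteq> 0) \<longrightarrow> (\<Sum>i\<in>W. \<Sum>j\<in>W. c i * gconv n U (unitvec j) f i * c j) > 0"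
proof (intro allI impI)
  fix c :: "nat \<Rightarrow> real" assume "\<exists>i\<in>W. c i \<noteq> 0"
  define c' where "c' = (\<lambda>j. if j \<in> W then c j else 0)"
  have c0: "\<forall>j. j \<notin> W \<longrightarrow> c' j = 0" by (simp add: c'_def)
  have "\<exists>i\<in>{1..n}. c' i \<noteq> 0" using \<open>\<exists>i\<in>W. c i \<noteq> 0\<close> W_sub by (auto simp: c'_def)
  hence "(\<Sum>i=1..n. \<Sum>j=1..n. c' i * gkernel n U f i j * c' j) > 0" using pd unfolding pd_function_def by blast
  also have "(\<Sum>i=1..n. \<Sum>j=1..n. c' i * gkernel n U f i j * c' j) = (\<Sum>i\<in>W. \<Sum>j\<in>W. c' i * gconv n U (unitvec j) f i * c' j)"
    using G_quad[OF c0] by simp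
  also have "\<dots> = (\<Sum>i\<in>W. \<Sum>j\<in>W. c i * gconv n U (unitvec j) f i * c j)"
    by (simp add: c'_def)
  finally show "(\<Sum>i\<in>W. \<Sum>j\<in>W. c i * gconv n U (unitvec j) f i * c j) > 0" .
qed

lemma interp_repr: "\<exists>b. (\<forall>j. j \<notin> W \<longrightarrow> b j = 0) \<and> (\<forall>w\<in>W. gbf_interp n U f W x w = x w) \<and>
   (\<forall>m\<in>{1..n}. hat (gbf_interp n U f W x) m = fh m * hat b m)"
proof -
  define P where "P c \<longleftrightarrow> (\<forall>j. j \<notin> W \<longrightarrow> c j = 0) \<and>
                      (\<forall>k\<in>W. (\<Sum>l\<in>W. gconv n U (unitvec l) f k * c l) = x k)" for c
  obtain b where b: "P b" unfolding P_def using pd_solve[OF finW G_sym G_pd, of x] by blast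
  have uniq: "c = b" if c: "P c" for c
  proof -
    define d where "d j = c j - b j" for j
    have d0: "\<forall>j. j \<notin> W \<longrightarrow> d j = 0" using b c by (simp add: P_def d_def)
    have dK: "(\<Sum>l\<in>W. gconv n U (unitvec l) f k * d l) = 0" if k: "k \<in> W" for k
      using b c k by (simp add: P_def d_def right_diff_distrib sum_subtractf)
    have "(\<Sum>i\<in>W. \<Sum>j\<in>W. d i * gconv n U (unitvec j) f i * d j) = (\<Sum>i\<in>W. d i * (\<Sum>j\<in>W. gconv n U (unitvec j) f i * d j))"
      by (simp add: sum_distrib_left mult.assoc)
    also have "\<dots> = 0" using dK by simp
    finally have "\<not> (\<exists>i\<in>W. d i \<noteq> 0)" using G_pd by force
    with d0 show ?thesis by (auto simp: d_def fun_eq_iff)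
  qed
  have I: "gbf_interp n U f W x = (\<lambda>i. \<Sum>k\<in>W. b k * gconv n U (unitvec k) f i)"
  proof -
    have "(THE c. P c) = b" using b uniq by (rule the_equality)
    thus ?thesis unfolding gbf_interp_def P_def[abs_def] Let_def by simp
  qed
  show ?thesis
  proof (intro exI[of _ b] conjI ballI)
    show "\<forall>j. j \<notin> W \<longrightarrow> b j = 0" using b by (simp add: P_def)
  next
    fix w assume w: "w \<in> W"
    show "gbf_interp n U f W x w = x w"
      using b w unfolding I P_def by (simp add: mult.commute)
  next
    fix m assume m: "m \<in> {1..n}"
    have "gbf_interp n U f W x = (\<lambda>i. \<Sum>l=1..n. gkernel n U f i l * b l)"
    proof (rule ext)
      fix i
      have "(\<Sum>l=1..n. gkernel n U f i l * b l) = (\<Sum>l\<in>W. gkernel n U f i l * b l)"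
        by (rule sumW) (use W_sub b in \<open>auto simp: P_def\<close>)
      thus "gbf_interp n U f W x i = (\<Sum>l=1..n. gkernel n U f i l * b l)"
        unfolding I by (simp add: gkernel_def mult.commute)
    qed
    thus "hat (gbf_interp n U f W x) m = fh m * hat b m" using hat_Kmul[OF m] by simp
  qed
qed


lemma avec: "v \<in> {1..n} \<Longrightarrow> \<exists>a. (\<forall>j. j \<notin> W \<longrightarrow> a j = 0) \<and> (\<forall>k\<in>{1..M}. hat a k = U v k) \<and>
    (\<Sum>i=1..n. (a i)^2) \<le> NN^2"
proof -
  assume v: "v \<in> {1..n}"
  obtain \<alpha> where \<alpha>s: "\<forall>k\<in>{1..M}. (\<Sum>l\<in>{1..M}. Gm k l * \<alpha> l) = U v k"
    using pd_solve[OF _ Gm_sym Gm_pd, of "\<lambda>k. U v k"] by blast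
  define a where "a = (\<lambda>w. if w \<in> W then ymk \<alpha> w else 0)"
  have a0: "\<forall>j. j \<notin> W \<longrightarrow> a j = 0" by (simp add: a_def)
  have ha: "hat a k = U v k" if k: "k \<in> {1..M}" for k
  proof -
    have "hat a k = (\<Sum>i\<in>W. U i k * a i)" unfolding gft_def
      by (rule sumW) (use W_sub a0 in auto)
    also have "\<dots> = (\<Sum>w\<in>W. \<Sum>l=1..M. \<alpha> l * (U w k * U w l))"
      by (intro sum.cong refl) (simp add: a_def ymk_W sum_distrib_left mult.commute mult.left_commute)
    also have "\<dots> = (\<Sum>l=1..M. \<Sum>w\<in>W. \<alpha> l * (U w k * U w l))" by (rule sum.swap)
    also have "\<dots> = (\<Sum>l\<in>{1..M}. Gm k l * \<alpha> l)"
      by (simp add: Gm_def sum_distrib_left sum_distrib_right mult.commute)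
    also have "\<dots> = U v k" using \<alpha>s k by blast
    finally show ?thesis .
  qed
  define q where "q = (\<Sum>w\<in>W. (ymk \<alpha> w)^2)"
  define S\<alpha> where "S\<alpha> = (\<Sum>k=1..M. (\<alpha> k)^2)"
  have q0: "q \<ge> 0" unfolding q_def by (simp add: sum_nonneg)
  have qa: "(\<Sum>i=1..n. (a i)^2) = q"
  proof -
    have "(\<Sum>i=1..n. (a i)^2) = (\<Sum>i\<in>W. (a i)^2)"
      by (rule sumW) (use W_sub a0 in auto)
    thus ?thesis by (simp add: q_def a_def)
  qed
  have "q = (\<Sum>i=1..M. \<Sum>j=1..M. \<alpha> i * Gm i j * \<alpha> j)" unfolding q_def by (rule Gm_quad[symmetric])
  also have "\<dots> = (\<Sum>i=1..M. \<alpha> i * (\<Sum>j\<in>{1..M}. Gm i j * \<alpha> j))"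
    by (simp add: sum_distrib_left mult.assoc)
  also have "\<dots> = (\<Sum>i=1..M. \<alpha> i * U v i)"
    using \<alpha>s by (intro sum.cong refl) simp
  finally have qe: "q = (\<Sum>i=1..M. \<alpha> i * U v i)" .
  have u1: "(\<Sum>k=1..M. (U v k)^2) \<le> 1"
  proof -
    have "(\<Sum>k=1..M. (U v k)^2) \<le> (\<Sum>k=1..n. (U v k)^2)"
      by (rule sum_mono2) (use Mn in auto)
    also have "\<dots> = 1" using rowortho[OF v v] by (simp add: power2_eq_square)
    finally show ?thesis .
  qed
  have "q^2 \<le> S\<alpha> * (\<Sum>k=1..M. (U v k)^2)"
    unfolding qe S\<alpha>_def by (rule Cauchy_Schwarz_ineq_sum)
  also have "\<dots> \<le> S\<alpha>" using u1 by (simp add: S\<alpha>_def mult_left_le sum_nonneg)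
  finally have qS: "q^2 \<le> S\<alpha>" .
  have "q \<le> NN^2"
  proof (cases "q = 0")
    case True thus ?thesis by simp
  next
    case False
    hence qp: "q > 0" using q0 by simp
    have "sqrt S\<alpha> \<le> NN * sqrt q" using NN_bound[of \<alpha>] False by (simp add: q_def S\<alpha>_def)
    moreover have S0: "S\<alpha> \<ge> 0" unfolding S\<alpha>_def by (simp add: sum_nonneg)
    ultimately have "(sqrt S\<alpha>)^2 \<le> (NN * sqrt q)^2"
      by (intro power_mono) simp_all
    hence "S\<alpha> \<le> NN^2 * q" using q0 S0 by (simp add: power_mult_distrib)
    hence "q * q \<le> NN^2 * q" using qS by (simp add: power2_eq_square)
    thus ?thesis using qp by simp
  qed
  thus ?thesis using a0 ha qa by blast
qed


lemma pointwise:
  assumes v: "v \<in> {1..n}" and B0: "B \<ge> 0" and hB: "\<And>k. k \<in> {1..n} \<Longrightarrow> M < k \<Longrightarrow> fh k \<le> B"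
  shows "\<bar>x v - gbf_interp n U f W x v\<bar> \<le> sqrt B * (1 + NN) * native_norm n U f x"
proof -
  obtain a where a0: "\<forall>j. j \<notin> W \<longrightarrow> a j = 0" and ha: "\<forall>k\<in>{1..M}. hat a k = U v k"
    and aN: "(\<Sum>i=1..n. (a i)^2) \<le> NN^2" using avec[OF v] by blast
  obtain b where b0: "\<forall>j. j \<notin> W \<longrightarrow> b j = 0" and IW: "\<forall>w\<in>W. gbf_interp n U f W x w = x w"
    and hI: "\<forall>m\<in>{1..n}. hat (gbf_interp n U f W x) m = fh m * hat b m" using interp_repr[of x] by blast
  define e where "e i = x i - gbf_interp n U f W x i" for i
  have eW: "e w = 0" if "w \<in> W" for w using IW that by (simp add: e_def)
  define cv where "cv i = (if i = v then 1 else 0) - a i" for i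
  have hcv: "hat cv k = U v k - hat a k" for k
  proof -
    have "hat cv k = (\<Sum>i=1..n. (if i = v then U i k else 0) - U i k * a i)"
      unfolding gft_def cv_def by (intro sum.cong refl) (simp add: right_diff_distrib)
    also have "\<dots> = U v k - hat a k" using v by (simp add: sum_subtractf gft_def)
    finally show ?thesis .
  qed
  have hcv0: "hat cv k = 0" if "k \<in> {1..M}" for k using ha that hcv by simp
  have he: "hat e m = hat x m - fh m * hat b m" if m: "m \<in> {1..n}" for m
  proof -
    have "hat e m = hat x m - hat (gbf_interp n U f W x) m"
      unfolding gft_def e_def by (simp add: right_diff_distrib sum_subtractf)
    thus ?thesis using hI m by simp
  qed
  define K where "K = {M<..n}"
  have Ksub: "K \<subseteq> {1..n}" unfolding K_def using M1 by auto
  have ae0: "(\<Sum>i=1..n. a i * e i) = 0"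
    by (rule sum.neutral) (use a0 eW in auto)
  have dl: "(\<Sum>i=1..n. (if i = v then 1 else 0) * e i) = (\<Sum>i=1..n. if i = v then e i else 0)"
    by (intro sum.cong refl) simp
  have "e v = (\<Sum>i=1..n. (if i = v then 1 else 0) * e i) - (\<Sum>i=1..n. a i * e i)"
    unfolding dl ae0 using v by (simp add: sum.delta')
  also have "\<dots> = (\<Sum>i=1..n. cv i * e i)" unfolding cv_def by (simp add: left_diff_distrib sum_subtractf)
  also have "\<dots> = (\<Sum>k=1..n. hat cv k * hat e k)" by (rule parseval)
  also have "\<dots> = (\<Sum>k\<in>K. hat cv k * hat e k)"
    by (rule sumW) (use Ksub hcv0 in \<open>auto simp: K_def\<close>)
  also have "\<dots> = (\<Sum>k\<in>K. (sqrt (fh k) * hat cv k) * (hat e k / sqrt (fh k)))"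
  proof (intro sum.cong refl)
    fix k assume "k \<in> K" hence "fh k > 0" using Ksub fh_pos by auto
    thus "hat cv k * hat e k = (sqrt (fh k) * hat cv k) * (hat e k / sqrt (fh k))" by simp
  qed
  finally have evK: "e v = (\<Sum>k\<in>K. (sqrt (fh k) * hat cv k) * (hat e k / sqrt (fh k)))" .
  define T1 where "T1 = (\<Sum>k\<in>K. (sqrt (fh k) * hat cv k)^2)"
  define T2 where "T2 = (\<Sum>k\<in>K. (hat e k / sqrt (fh k))^2)"
  have CS: "(e v)^2 \<le> T1 * T2" unfolding evK T1_def T2_def by (rule Cauchy_Schwarz_ineq_sum)
  have T10: "T1 \<ge> 0" "T2 \<ge> 0" unfolding T1_def T2_def by (simp_all add: sum_nonneg)
  define qa where "qa = (\<Sum>i=1..n. (a i)^2)"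
  have qa0: "qa \<ge> 0" unfolding qa_def by (simp add: sum_nonneg)
  have sqa: "sqrt qa \<le> NN" using aN NN_nonneg unfolding qa_def by (metis real_sqrt_le_iff real_sqrt_abs abs_of_nonneg)
  have av: "(a v)^2 \<le> qa" unfolding qa_def
    by (rule member_le_sum[of v _ "\<lambda>i. (a i)^2"]) (use v in auto)
  have av': "- a v \<le> sqrt qa"
  proof -
    have "\<bar>a v\<bar> \<le> sqrt qa" using av by (simp add: real_le_rsqrt)
    thus ?thesis by linarith
  qed
  have cvsq: "(\<Sum>i=1..n. (cv i)^2) = 1 - 2 * a v + qa"
  proof -
    have "(\<Sum>i=1..n. (cv i)^2) = (\<Sum>i=1..n. (if i = v then 1 else 0) - 2 * (if i = v then a i else 0) + (a i)^2)"
      by (intro sum.cong refl) (auto simp: cv_def power2_eq_square algebra_simps)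
    also have "\<dots> = 1 - 2 * a v + qa" using v
      by (simp add: qa_def sum.distrib sum_subtractf sum_distrib_left[symmetric])
    finally show ?thesis .
  qed
  have cvb: "(\<Sum>i=1..n. (cv i)^2) \<le> (1 + NN)^2"
  proof -
    have "(\<Sum>i=1..n. (cv i)^2) \<le> (1 + sqrt qa)^2"
      using cvsq av' qa0 by (simp add: power2_eq_square algebra_simps)
    also have "\<dots> \<le> (1 + NN)^2" using sqa qa0 by (intro power_mono) auto
    finally show ?thesis .
  qed
  have "T1 \<le> (\<Sum>k\<in>K. B * (hat cv k)^2)"
    unfolding T1_def
  proof (rule sum_mono)
    fix k assume k: "k \<in> K"
    hence "fh k > 0" "fh k \<le> B" using Ksub fh_pos hB[of k] by (auto simp: K_def)
    thus "(sqrt (fh k) * hat cv k)^2 \<le> B * (hat cv k)^2"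
      by (simp add: power_mult_distrib mult_right_mono)
  qed
  also have "\<dots> \<le> (\<Sum>k=1..n. B * (hat cv k)^2)"
    by (rule sum_mono2) (use Ksub B0 in auto)
  also have "\<dots> = B * (\<Sum>i=1..n. (cv i)^2)"
    using parseval[of cv cv] by (simp add: sum_distrib_left power2_eq_square)
  also have "\<dots> \<le> B * (1 + NN)^2" using cvb B0 by (rule mult_left_mono)
  finally have T1b: "T1 \<le> B * (1 + NN)^2" .
  have eb0: "(\<Sum>k=1..n. hat e k * hat b k) = 0"
  proof -
    have "(\<Sum>k=1..n. hat e k * hat b k) = (\<Sum>i=1..n. e i * b i)" by (rule parseval[symmetric])
    also have "\<dots> = 0" by (rule sum.neutral) (use b0 eW in auto)
    finally show ?thesis .
  qed
  have "T2 = (\<Sum>k\<in>K. (hat e k)^2 / fh k)"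
    unfolding T2_def
  proof (intro sum.cong refl)
    fix k assume "k \<in> K" hence "fh k > 0" using Ksub fh_pos by auto
    thus "(hat e k / sqrt (fh k))^2 = (hat e k)^2 / fh k" by (simp add: power_divide)
  qed
  also have "\<dots> \<le> (\<Sum>k=1..n. (hat e k)^2 / fh k)"
    by (rule sum_mono2) (use Ksub fh_pos in \<open>auto intro!: divide_nonneg_pos\<close>)
  also have "\<dots> \<le> (\<Sum>k=1..n. (hat e k)^2 / fh k + 2 * (hat e k * hat b k) + fh k * (hat b k)^2)"
  proof -
    have "0 \<le> (\<Sum>k=1..n. fh k * (hat b k)^2)"
    proof (rule sum_nonneg)
      fix k assume "k \<in> {1..n}" thus "0 \<le> fh k * (hat b k)^2" using fh_pos[of k] by simp
    qed
    thus ?thesis using eb0 by (simp add: sum.distrib sum_distrib_left[symmetric])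
  qed
  also have "\<dots> = (\<Sum>k=1..n. (hat x k)^2 / fh k)"
  proof (intro sum.cong refl)
    fix k assume k: "k \<in> {1..n}"
    have fp: "fh k > 0" using fh_pos[OF k] .
    have "hat x k = hat e k + fh k * hat b k" using he[OF k] by simp
    thus "(hat e k)^2 / fh k + 2 * (hat e k * hat b k) + fh k * (hat b k)^2 = (hat x k)^2 / fh k"
      using fp by (simp add: field_simps power2_eq_square)
  qed
  also have "\<dots> = (native_norm n U f x)^2" by (rule native_sq[symmetric])
  finally have T2b: "T2 \<le> (native_norm n U f x)^2" .
  have "(e v)^2 \<le> (B * (1 + NN)^2) * (native_norm n U f x)^2"
    using CS T1b T2b T10 by (meson mult_mono order_trans zero_le_power2 B0 mult_nonneg_nonneg)
  also have "\<dots> = (sqrt B * (1 + NN) * native_norm n U f x)^2"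
    using B0 by (simp add: power_mult_distrib)
  finally have sq: "(e v)^2 \<le> (sqrt B * (1 + NN) * native_norm n U f x)^2" .
  have R0: "sqrt B * (1 + NN) * native_norm n U f x \<ge> 0"
    using B0 NN_nonneg native_nonneg by simp
  have "\<bar>e v\<bar> \<le> \<bar>sqrt B * (1 + NN) * native_norm n U f x\<bar>" using sq by (simp add: abs_le_square_iff)
  thus ?thesis using R0 by (simp add: e_def)
qed


lemma maxbound:
  assumes B0: "B \<ge> 0" and hB: "\<And>k. k \<in> {1..n} \<Longrightarrow> M < k \<Longrightarrow> fh k \<le> B"
  shows "Max ((\<lambda>v. \<bar>x v - gbf_interp n U f W x v\<bar>) ` {1..n}) \<le> sqrt B * (1 + NN) * native_norm n U f x"
proof -
  have "{1..n} \<noteq> {}" using M1 Mn by auto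
  thus ?thesis using pointwise[OF _ B0 hB] by (simp add: Max_le_iff)
qed

end

lemma powr_key:
  fixes m s :: real assumes m: "m \<ge> 1" and s: "s > 1"
  shows "(m+1) powr (-s) \<le> m powr (1-s) / (s-1)"
proof -
  define q where "q = s - 1"
  define r where "r = (m+1)/m"
  have q: "q > 0" using s by (simp add: q_def)
  have r1: "r > 0" using m by (simp add: r_def)
  have "ln (1/r) \<le> 1/r - 1" using ln_le_minus_one[of "1/r"] r1 by simp
  hence lnr: "ln r \<ge> 1/(m+1)" using m r1 by (simp add: ln_div r_def field_simps)
  have "r powr q = exp (q * ln r)" using r1 by (simp add: powr_def mult.commute)
  also have "\<dots> \<ge> 1 + q * ln r" by (rule exp_ge_add_one_self)
  finally have rq: "r powr q \<ge> 1 + q * ln r" .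
  have "q * (1/(m+1)) \<le> q * ln r" using lnr q by (intro mult_left_mono) auto
  hence "r powr q \<ge> q / (m+1)" using rq by simp
  hence key: "q \<le> (m+1) * r powr q" using m by (simp add: field_simps)
  have "(m+1) powr (-s) = (m+1) powr (-q + (-1))" by (simp add: q_def)
  also have "\<dots> = (m+1) powr (-q) * (m+1) powr (-1)" by (rule powr_add)
  also have "(m+1) powr (-1) = 1 / (m+1)" using m by (simp add: powr_minus divide_inverse)
  finally have e1: "(m+1) powr (-s) = (m+1) powr (-q) / (m+1)" by simp
  have e2: "r powr q = (m+1) powr q / m powr q" using m by (simp add: r_def powr_divide)
  have pos: "(m+1) powr q > 0" "m powr q > 0" using m by auto
  have k2: "q * m powr q \<le> (m+1) * (m+1) powr q"
  proof -
    have "q * m powr q \<le> (m+1) * r powr q * m powr q" using key pos by (intro mult_right_mono) auto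
    also have "\<dots> = (m+1) * (m+1) powr q" unfolding e2 using pos by simp
    finally show ?thesis .
  qed
  have "1 / ((m+1) * (m+1) powr q) \<le> 1 / (q * m powr q)"
    by (rule divide_left_mono[OF k2]) (use pos q m in auto)
  moreover have "(m+1) powr (-q) / (m+1) = 1 / ((m+1) * (m+1) powr q)"
    using m by (simp add: powr_minus divide_inverse)
  moreover have "m powr (-q) / q = 1 / (q * m powr q)"
    using m by (simp add: powr_minus divide_inverse mult.commute)
  ultimately have "(m+1) powr (-q) / (m+1) \<le> m powr (-q) / q" by simp
  thus ?thesis using e1 by (simp add: q_def)
qed

lemma sqrt_powr_half: "(m::real) > 0 \<Longrightarrow> sqrt (m powr a) = m powr (a/2)"
proof -
  assume m: "m > 0"
  have "(m powr (a/2))^2 = m powr a" using m by (simp add: power2_eq_square powr_add[symmetric])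
  thus ?thesis by (intro real_sqrt_unique) auto
qed

lemma sqrt_exp_half: "sqrt (exp y) = exp (y/2)"
proof -
  have "(exp (y/2))^2 = exp y" by (simp add: power2_eq_square exp_add[symmetric])
  thus ?thesis by (intro real_sqrt_unique) auto
qed

theorem corollary2:
  fixes n M :: nat and A U :: "nat \<Rightarrow> nat \<Rightarrow> real" and lam f x :: "nat \<Rightarrow> real"
    and W :: "nat set"
  assumes A_sym: "\<forall>i\<in>{1..n}. \<forall>j\<in>{1..n}. A i j = A j i"
    and A_nonneg: "\<forall>i\<in>{1..n}. \<forall>j\<in>{1..n}. A i j \<ge> 0"
    and deg_pos: "\<forall>i\<in>{1..n}. gdegree n A i > 0"
    and eig: "orthonormal_eigdec n (nlap n A) U lam"
    and pd: "pd_function n U f"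
    and W_sub: "W \<subseteq> {1..n}"
    and M_range: "1 \<le> M" "M \<le> n"
    and norming: "norming_set n U M W"
  shows
    "(\<forall>C1 s. C1 > 0 \<and> s > 1 \<and> (\<forall>k\<in>{1..n}. gft n U f k \<le> C1 * real k powr (-s)) \<longrightarrow>
        Max ((\<lambda>v. \<bar>x v - gbf_interp n U f W x v\<bar>) ` {1..n})
          \<le> sqrt (C1 / (s - 1)) * (1 + inv_sampling_norm n U M W)
             * real M powr (-(s - 1) / 2) * native_norm n U f x)
   \<and> (\<forall>C2 t. C2 > 0 \<and> t > 0 \<and> (\<forall>k\<in>{1..n}. gft n U f k \<le> C2 * exp (-t * real k)) \<longrightarrow>
        Max ((\<lambda>v. \<bar>x v - gbf_interp n U f W x v\<bar>) ` {1..n})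
          \<le> sqrt (C2 / (1 - exp (-t))) * (1 + inv_sampling_norm n U M W)
             * exp (-(t / 2) * (real M + 1)) * native_norm n U f x)"
proof -
  have ortho: "\<And>k l. k\<in>{1..n} \<Longrightarrow> l\<in>{1..n} \<Longrightarrow> (\<Sum>i=1..n. U i k * U i l) = (if k = l then 1 else 0)"
    using eig unfolding orthonormal_eigdec_def by blast
  interpret gs2 n U f W M
    by unfold_locales (use ortho pd W_sub M_range norming in auto)
  have Mpos: "real M > 0" using M_range by simp
  show ?thesis
  proof (intro conjI allI impI)
    fix C1 s :: real
    assume h: "C1 > 0 \<and> s > 1 \<and> (\<forall>k\<in>{1..n}. gft n U f k \<le> C1 * real k powr (-s))"
    hence C1: "C1 > 0" and s: "s > 1" and hf: "\<And>k. k \<in> {1..n} \<Longrightarrow> gft n U f k \<le> C1 * real k powr (-s)" by auto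
    define B where "B = C1 / (s - 1) * real M powr (1 - s)"
    have B0: "B \<ge> 0" using C1 s by (simp add: B_def)
    have hB: "gft n U f k \<le> B" if k: "k \<in> {1..n}" and kM: "M < k" for k
    proof -
      have "real k powr (-s) \<le> (real M + 1) powr (-s)"
        using kM s by (intro powr_mono2') auto
      also have "\<dots> \<le> real M powr (1 - s) / (s - 1)"
        using powr_key[of "real M" s] M_range s by simp
      finally have "C1 * real k powr (-s) \<le> C1 * (real M powr (1 - s) / (s - 1))"
        using C1 by (intro mult_left_mono) auto
      thus ?thesis using hf[OF k] by (simp add: B_def)
    qed
    have "sqrt B = sqrt (C1 / (s - 1)) * sqrt (real M powr (1 - s))"
      unfolding B_def by (rule real_sqrt_mult)
    also have "sqrt (real M powr (1 - s)) = real M powr ((1 - s) / 2)" using Mpos by (rule sqrt_powr_half)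
    also have "(1 - s) / 2 = -(s - 1) / 2" by simp
    finally have "sqrt B = sqrt (C1 / (s - 1)) * real M powr (-(s - 1) / 2)" .
    thus "Max ((\<lambda>v. \<bar>x v - gbf_interp n U f W x v\<bar>) ` {1..n})
          \<le> sqrt (C1 / (s - 1)) * (1 + inv_sampling_norm n U M W)
             * real M powr (-(s - 1) / 2) * native_norm n U f x"
      using maxbound[OF B0 hB, of x] by (simp add: mult_ac)
  next
    fix C2 t :: real
    assume h: "C2 > 0 \<and> t > 0 \<and> (\<forall>k\<in>{1..n}. gft n U f k \<le> C2 * exp (-t * real k))"
    hence C2: "C2 > 0" and t: "t > 0" and hf: "\<And>k. k \<in> {1..n} \<Longrightarrow> gft n U f k \<le> C2 * exp (-t * real k)" by auto
    have et: "exp (-t) < 1" "exp (-t) > 0" using t by auto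
    define B where "B = C2 / (1 - exp (-t)) * exp (-t * (real M + 1))"
    have B0: "B \<ge> 0" using C2 et by (simp add: B_def)
    have hB: "gft n U f k \<le> B" if k: "k \<in> {1..n}" and kM: "M < k" for k
    proof -
      have "exp (-t * real k) \<le> exp (-t * (real M + 1))"
        using kM t by simp
      also have "\<dots> \<le> exp (-t * (real M + 1)) / (1 - exp (-t))"
        using et by (simp add: le_divide_eq)
      finally have "C2 * exp (-t * real k) \<le> C2 * (exp (-t * (real M + 1)) / (1 - exp (-t)))"
        using C2 by (intro mult_left_mono) auto
      thus ?thesis using hf[OF k] by (simp add: B_def)
    qed
    have "sqrt B = sqrt (C2 / (1 - exp (-t))) * sqrt (exp (-t * (real M + 1)))"
      unfolding B_def by (rule real_sqrt_mult)
    also have "sqrt (exp (-t * (real M + 1))) = exp (-t * (real M + 1) / 2)" by (rule sqrt_exp_half)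
    also have "-t * (real M + 1) / 2 = -(t / 2) * (real M + 1)" by simp
    finally have "sqrt B = sqrt (C2 / (1 - exp (-t))) * exp (-(t / 2) * (real M + 1))" .
    thus "Max ((\<lambda>v. \<bar>x v - gbf_interp n U f W x v\<bar>) ` {1..n})
          \<le> sqrt (C2 / (1 - exp (-t))) * (1 + inv_sampling_norm n U M W)
             * exp (-(t / 2) * (real M + 1)) * native_norm n U f x"
      using maxbound[OF B0 hB, of x] by (simp add: mult_ac)
  qed
qed

end
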